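(* Let $x=(x_n)$ and $y=(y_n)$ be sequences of real numbers such that $\sum_n x_n$ and $\sum_n y_n$ are absolutely convergent. If every point of $E(x)$ has a unique representation, or every point of $E(y)$ has a unique representation, then $E(x,y)$ is a Cantor set.
   Context: For an absolutely convergent series $\sum_n v_n$ in $\mathbb R^d$, its achievement set is $E(v)=\{\sum_{n=1}^\infty \varepsilon_n v_n : (\varepsilon_n)\in\{0,1\}^{\mathbb N}\}$; $E(x,y)$ denotes the achievement set of the sequence $((x_n,y_n))_n$ in $\mathbb R^2$. A point $a$ of $E(v)$ has a unique representation if there is exactly one set $A\subset\mathbb N$ with $a=\sum_{i\in A}v_i$. A Cantor set is a nonempty, totally disconnected, perfect, compact subset of $\mathbb R^n$. *)

theory Defs
  imports "HOL-Analysis.Analysis"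
begin

text \<open>Achievement set of a series: all subsums \<open>\<Sum>n. \<epsilon>\<^sub>n v\<^sub>n\<close> with \<open>\<epsilon>\<^sub>n \<in> {0,1}\<close>,
  where a 0/1-sequence is encoded by the set A of indices with \<open>\<epsilon>\<^sub>n = 1\<close>.\<close>
definition subsum :: "(nat \<Rightarrow> 'a::real_normed_vector) \<Rightarrow> nat set \<Rightarrow> 'a" where
  "subsum v A = (\<Sum>n. (if n \<in> A then v n else 0))"

definition achievement_set :: "(nat \<Rightarrow> 'a::real_normed_vector) \<Rightarrow> 'a set" where
  "achievement_set v = {subsum v A | A. True}"

definition unique_representation :: "(nat \<Rightarrow> 'a::real_normed_vector) \<Rightarrow> 'a \<Rightarrow> bool" where
  "unique_representation v a \<longleftrightarrow> (\<exists>!A. a = subsum v A)"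

definition totally_disconnected :: "'a::topological_space set \<Rightarrow> bool" where
  "totally_disconnected S \<longleftrightarrow>
     (\<forall>C. C \<subseteq> S \<and> connected C \<longrightarrow> (\<forall>a\<in>C. \<forall>b\<in>C. a = b))"

definition perfect_set :: "'a::topological_space set \<Rightarrow> bool" where
  "perfect_set S \<longleftrightarrow> closed S \<and> (\<forall>x\<in>S. x islimpt S)"

definition cantor_set :: "'a::topological_space set \<Rightarrow> bool" where
  "cantor_set S \<longleftrightarrow> S \<noteq> {} \<and> totally_disconnected S \<and> perfect_set S \<and> compact S"

end

theory Submission
  imports Defs
begin

lemma w_summable:
  fixes v :: "nat \<Rightarrow> 'a::banach"
  assumes "summable (\<lambda>n. norm (v n))"
  shows "summable (\<lambda>n. if n \<in> A then v n else 0)"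
  apply (rule summable_norm_cancel)
  apply (rule summable_comparison_test[OF _ assms])
  by auto

lemma subsum_insert:
  fixes v :: "nat \<Rightarrow> 'a::banach"
  assumes "summable (\<lambda>n. norm (v n))" "k \<notin> A"
  shows "subsum v (insert k A) = subsum v A + v k"
proof -
  have eq: "(\<lambda>n. if n \<in> insert k A then v n else 0)
      = (\<lambda>n. (if n \<in> A then v n else 0) + (if n = k then v n else 0))"
    using assms(2) by auto
  show ?thesis unfolding subsum_def eq
    using suminf_add[OF w_summable[OF assms(1)] sums_summable[OF sums_single]]
      sums_unique[OF sums_single[of k v]] by simp
qed

lemma ach_compact:
  fixes v :: "nat \<Rightarrow> 'a::banach"
  assumes sv: "summable (\<lambda>n. norm (v n))"
  shows "compact (achievement_set v)"
proof -
  define K where "K = PiE UNIV (\<lambda>_::nat. {0::real,1})"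
  have "compactin (product_topology (\<lambda>_. euclidean) UNIV) K"
    unfolding K_def compactin_PiE by auto
  then have cK: "compact K"
    by (metis compactin_euclidean_iff euclidean_product_topology)
  define phi where "phi = (\<lambda>f::nat\<Rightarrow>real. \<Sum>n. f n *\<^sub>R v n)"
  have ul: "uniform_limit K (\<lambda>m f. \<Sum>i<m. f i *\<^sub>R v i) phi sequentially"
    unfolding phi_def
  proof (rule Weierstrass_m_test[OF _ sv])
    fix n f assume "f \<in> K"
    then have "f n \<in> {0,1}" unfolding K_def by auto
    then show "norm (f n *\<^sub>R v n) \<le> norm (v n)" by auto
  qed
  have "continuous_on K phi"
  proof (rule uniform_limit_theorem[OF _ ul])
    show "\<forall>\<^sub>F m in sequentially. continuous_on K (\<lambda>f. \<Sum>i<m. f i *\<^sub>R v i)"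
      by (intro always_eventually allI continuous_intros
          continuous_on_subset[OF continuous_on_product_coordinates]) auto
  qed auto
  then have "compact (phi ` K)" using cK compact_continuous_image by blast
  moreover have "phi ` K = achievement_set v"
  proof
    show "phi ` K \<subseteq> achievement_set v"
    proof
      fix p assume "p \<in> phi ` K"
      then obtain f where f: "f \<in> K" "p = phi f" by auto
      have "(\<lambda>n. f n *\<^sub>R v n) = (\<lambda>n. if n \<in> {n. f n = 1} then v n else 0)"
        using f(1) unfolding K_def by (auto simp: fun_eq_iff)
      then have "p = subsum v {n. f n = 1}" using f unfolding phi_def subsum_def by simp
      then show "p \<in> achievement_set v" unfolding achievement_set_def by blast
    qed
    show "achievement_set v \<subseteq> phi ` K"
    proof
      fix p assume "p \<in> achievement_set v"
      then obtain A where A: "p = subsum v A" unfolding achievement_set_def by blast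
      define f where "f = (\<lambda>n. if n \<in> A then 1 else (0::real))"
      have "f \<in> K" unfolding K_def f_def by (simp add: PiE_UNIV_domain)
      moreover have "(\<lambda>n. f n *\<^sub>R v n) = (\<lambda>n. if n \<in> A then v n else 0)"
        unfolding f_def by (rule ext) simp
      then have "p = phi f" using A unfolding phi_def subsum_def by simp
      ultimately show "p \<in> phi ` K" by blast
    qed
  qed
  ultimately show ?thesis by simp
qed

lemma Eo_eq:
  fixes v v' :: "nat \<Rightarrow> 'a::banach"
  assumes sub': "\<And>D. subsum v' D = subsum v (D - {n})"
  shows "{subsum v D | D. n \<notin> D} = achievement_set v'"
  unfolding achievement_set_def sub'
proof (intro equalityI subsetI)
  fix p assume "p \<in> {subsum v D |D. n \<notin> D}"
  then obtain D where D: "p = subsum v D" "n \<notin> D" by blast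
  from D(2) have "D - {n} = D" by simp
  with D(1) have "p = subsum v (D - {n})" by simp
  then show "p \<in> {subsum v (A - {n}) |A. True}" by auto
next
  fix p assume "p \<in> {subsum v (A - {n}) |A. True}"
  then obtain D where "p = subsum v (D - {n})" by blast
  moreover have "n \<notin> D - {n}" by simp
  ultimately show "p \<in> {subsum v D |D. n \<notin> D}" by auto
qed

lemma main:
  fixes v :: "nat \<Rightarrow> 'a::banach"
  assumes sv: "summable (\<lambda>n. norm (v n))"
    and inj: "\<And>A B. subsum v A = subsum v B \<Longrightarrow> A = B"
  shows "cantor_set (achievement_set v)"
proof -
  let ?E = "achievement_set v"
  have cE: "compact ?E" by (rule ach_compact[OF sv])
  have vnz: "v k \<noteq> 0" for k
  proof
    assume "v k = 0"
    then have "subsum v (insert k {}) = subsum v {}" using subsum_insert[OF sv, of k "{}"] by simp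
    then show False using inj by blast
  qed
  have lim: "p islimpt ?E" if "p \<in> ?E" for p
  proof -
    obtain A where A: "p = subsum v A" using \<open>p \<in> ?E\<close> unfolding achievement_set_def by blast
    have v0: "(\<lambda>n. norm (v n)) \<longlonglongrightarrow> 0" using summable_LIMSEQ_zero[OF sv] .
    show ?thesis unfolding islimpt_approachable
    proof (intro allI impI)
      fix e :: real assume "e > 0"
      then obtain k where k: "norm (v k) < e"
        using v0 unfolding lim_sequentially by fastforce
      show "\<exists>x'\<in>?E. x' \<noteq> p \<and> dist x' p < e"
      proof (cases "k \<in> A")
        case True
        have eq: "insert k (A - {k}) = A" using True by auto
        have "p = subsum v (A - {k}) + v k"
          using subsum_insert[OF sv, of k "A - {k}"] A eq by simp
        then show ?thesis using k vnz[of k]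
          by (intro bexI[of _ "subsum v (A - {k})"]) (auto simp: dist_norm achievement_set_def)
      next
        case False
        have eq: "subsum v (insert k A) = p + v k"
          using subsum_insert[OF sv False] A by simp
        have "subsum v (insert k A) \<in> ?E" unfolding achievement_set_def by blast
        moreover have "subsum v (insert k A) \<noteq> p" using eq vnz[of k] by simp
        moreover have "dist (subsum v (insert k A)) p < e" using eq k by (simp add: dist_norm)
        ultimately show ?thesis by blast
      qed
    qed
  qed
  have td: "totally_disconnected ?E"
    unfolding totally_disconnected_def
  proof (intro allI impI ballI)
    fix C a b assume C: "C \<subseteq> ?E \<and> connected C" and ab: "a \<in> C" "b \<in> C"
    show "a = b"
    proof (rule ccontr)
      assume "a \<noteq> b"
      obtain A B where AB: "a = subsum v A" "b = subsum v B"
        using ab C unfolding achievement_set_def by blast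
      with \<open>a \<noteq> b\<close> have "A \<noteq> B" by auto
      then obtain n where n: "(n \<in> A) \<noteq> (n \<in> B)" by blast
      define v' where "v' = v(n := 0)"
      have sv': "summable (\<lambda>m. norm (v' m))"
        by (rule summable_comparison_test[OF _ sv]) (auto simp: v'_def)
      define Eo where "Eo = {subsum v D | D. n \<notin> D}"
      define Ei where "Ei = {subsum v D | D. n \<in> D}"
      have sub': "subsum v' D = subsum v (D - {n})" for D
        unfolding subsum_def v'_def by (rule arg_cong[where f=suminf]) auto
      have "Eo = achievement_set v'"
        unfolding Eo_def by (rule Eo_eq[OF sub'])
      then have cEo: "compact Eo" using ach_compact[OF sv'] by simp
      have "Ei = (+) (v n) ` Eo"
      proof
        show "Ei \<subseteq> (+) (v n) ` Eo"
        proof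
          fix p assume "p \<in> Ei"
          then obtain D where D: "p = subsum v D" "n \<in> D" unfolding Ei_def by blast
          have "insert n (D - {n}) = D" using D by auto
          then have "p = v n + subsum v (D - {n})"
            using subsum_insert[OF sv, of n "D - {n}"] D by (simp add: add.commute)
          then show "p \<in> (+) (v n) ` Eo" unfolding Eo_def by blast
        qed
        show "(+) (v n) ` Eo \<subseteq> Ei"
        proof
          fix p assume "p \<in> (+) (v n) ` Eo"
          then obtain D where D: "p = v n + subsum v D" "n \<notin> D" unfolding Eo_def by blast
          then have "p = subsum v (insert n D)"
            using subsum_insert[OF sv D(2)] by (simp add: add.commute)
          then show "p \<in> Ei" unfolding Ei_def by blast
        qed
      qed
      then have cEi: "compact Ei" using compact_translation[OF cEo] by simp
      have disj: "Ei \<inter> Eo = {}"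
        unfolding Ei_def Eo_def using inj by blast
      have cov: "C \<subseteq> Ei \<union> Eo"
        using C unfolding achievement_set_def Ei_def Eo_def by blast
      have "a \<in> Ei \<and> b \<in> Eo \<or> a \<in> Eo \<and> b \<in> Ei"
        using n AB unfolding Ei_def Eo_def by blast
      then have "Ei \<inter> C \<noteq> {} \<and> Eo \<inter> C \<noteq> {}" using ab by blast
      then show False
        using C cov disj compact_imp_closed[OF cEi] compact_imp_closed[OF cEo]
        unfolding connected_closed by blast
    qed
  qed
  have "?E \<noteq> {}" unfolding achievement_set_def by blast
  then show ?thesis
    unfolding cantor_set_def perfect_set_def
    using cE td lim compact_imp_closed[OF cE] by (intro conjI ballI) auto
qed

theorem corollary2p3:
  fixes x y :: "nat \<Rightarrow> real"
  assumes "summable (\<lambda>n. \<bar>x n\<bar>)" and "summable (\<lambda>n. \<bar>y n\<bar>)"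
    and "(\<forall>a\<in>achievement_set x. unique_representation x a)
         \<or> (\<forall>a\<in>achievement_set y. unique_representation y a)"
  shows "cantor_set (achievement_set (\<lambda>n. (x n, y n)))"
proof -
  let ?v = "\<lambda>n. (x n, y n)"
  have sv: "summable (\<lambda>n. norm (?v n))"
  proof (rule summable_comparison_test[OF _ summable_add[OF assms(1) assms(2)]])
    show "\<exists>N. \<forall>n\<ge>N. norm (norm (?v n)) \<le> \<bar>x n\<bar> + \<bar>y n\<bar>"
    proof (intro exI allI impI)
      fix n :: nat
      have "norm (?v n) \<le> norm (x n) + norm (y n)" by (rule norm_Pair_le)
      then show "norm (norm (?v n)) \<le> \<bar>x n\<bar> + \<bar>y n\<bar>" by simp
    qed
  qed
  have fs: "fst (subsum ?v A) = subsum x A" "snd (subsum ?v A) = subsum y A" for A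
  proof -
    have s: "summable (\<lambda>n. if n \<in> A then ?v n else 0)" by (rule w_summable[OF sv])
    show "fst (subsum ?v A) = subsum x A"
      unfolding subsum_def bounded_linear.suminf[OF bounded_linear_fst s]
      by (rule arg_cong[where f=suminf]) auto
    show "snd (subsum ?v A) = subsum y A"
      unfolding subsum_def bounded_linear.suminf[OF bounded_linear_snd s]
      by (rule arg_cong[where f=suminf]) auto
  qed
  have inj: "A = B" if "subsum ?v A = subsum ?v B" for A B
  proof (rule disjE[OF assms(3)])
    assume u: "\<forall>a\<in>achievement_set x. unique_representation x a"
    have e: "subsum x B = subsum x A" using fs[of A] fs[of B] that by simp
    have "unique_representation x (subsum x A)"
      using u unfolding achievement_set_def by blast
    then have "\<forall>E. subsum x A = subsum x E \<longrightarrow> E = A"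
      unfolding unique_representation_def Ex1_def by blast
    with e show ?thesis by (metis (no_types))
  next
    assume u: "\<forall>a\<in>achievement_set y. unique_representation y a"
    have e: "subsum y B = subsum y A" using fs[of A] fs[of B] that by simp
    have "unique_representation y (subsum y A)"
      using u unfolding achievement_set_def by blast
    then have "\<forall>E. subsum y A = subsum y E \<longrightarrow> E = A"
      unfolding unique_representation_def Ex1_def by blast
    with e show ?thesis by (metis (no_types))
  qed
  show ?thesis by (rule main[OF sv inj])
qed

end
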